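(* Let $A_1,A_2,B_1,B_2,C_1,C_2$ be pairwise intersecting compact convex sets in the plane (not necessarily distinct). Suppose $o(A_1A_2B_1B_2)=o(A_1A_2C_1C_2)=o(B_1B_2C_1C_2)=0$, $o(A_1B_1C_1)\ne0$ and $o(A_2B_2C_2)\ne0$. Then $o(A_1B_1C_1)=o(A_2B_2C_2)$.
   Context: For three pairwise intersecting compact convex sets $X,Y,Z$ in the plane: $o(XYZ)=0$ if $X\cap Y\cap Z\neq\emptyset$; otherwise $o(XYZ)=o(xyz)$ for any $x\in Y\cap Z$, $y\in X\cap Z$, $z\in X\cap Y$, where for points $o(xyz)=+1$ for a counterclockwise and $-1$ for a clockwise triangle (independent of the choice). For sets $X_1,\dots,X_n$, the shorthand $o(X_1\dots X_n)=0$ means $o(X_iX_jX_k)=0$ for all $i<j<k$. *)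

theory Defs
  imports "HOL-Analysis.Analysis"
begin

definition orient_pts :: "real^2 \<Rightarrow> real^2 \<Rightarrow> real^2 \<Rightarrow> int" where
  "orient_pts x y z =
     \<lfloor>sgn ((y$1 - x$1) * (z$2 - x$2) - (y$2 - x$2) * (z$1 - x$1))\<rfloor>"

text \<open>Orientation of three pairwise intersecting compact convex sets: 0 if they have a common
  point, otherwise the orientation of x \<in> Y\<inter>Z, y \<in> X\<inter>Z, z \<in> X\<inter>Y (independent of the choice).\<close>
definition orient_sets :: "(real^2) set \<Rightarrow> (real^2) set \<Rightarrow> (real^2) set \<Rightarrow> int" where
  "orient_sets X Y Z =
     (if X \<inter> Y \<inter> Z \<noteq> {} then 0
      else orient_pts (SOME x. x \<in> Y \<inter> Z) (SOME y. y \<in> X \<inter> Z) (SOME z. z \<in> X \<inter> Y))"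

definition orient4_zero :: "(real^2) set \<Rightarrow> (real^2) set \<Rightarrow> (real^2) set \<Rightarrow> (real^2) set \<Rightarrow> bool" where
  "orient4_zero X1 X2 X3 X4 \<longleftrightarrow>
     orient_sets X1 X2 X3 = 0 \<and> orient_sets X1 X2 X4 = 0 \<and>
     orient_sets X1 X3 X4 = 0 \<and> orient_sets X2 X3 X4 = 0"

end

theory Submission imports Defs begin

definition D2 :: "real^2 \<Rightarrow> real^2 \<Rightarrow> real^2 \<Rightarrow> real" where
  "D2 x y z = (y$1 - x$1) * (z$2 - x$2) - (y$2 - x$2) * (z$1 - x$1)"

lemma D2_collinear:
  assumes "D2 x y z = 0" shows "collinear {x, y, z}"
proof -
  have key: "\<exists>c. z = x + c *\<^sub>R (y - x)" if "y \<noteq> x"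
  proof (cases "y$1 = x$1")
    case True
    then have "y$2 \<noteq> x$2" using that by (metis exhaust_2 vec_eq_iff)
    define c where "c = (z$2 - x$2) / (y$2 - x$2)"
    have "(y$2 - x$2) * (z$1 - x$1) = 0" using assms True by (simp add: D2_def)
    then have z1: "z$1 = x$1" using \<open>y$2 \<noteq> x$2\<close> by simp
    have z2: "z$2 = x$2 + c * (y$2 - x$2)" using \<open>y$2 \<noteq> x$2\<close> by (simp add: c_def)
    have "z = x + c *\<^sub>R (y - x)"
      unfolding vec_eq_iff forall_2 using z1 z2 True by simp
    then show ?thesis by blast
  next
    case False
    define c where "c = (z$1 - x$1) / (y$1 - x$1)"
    have z1: "z$1 = x$1 + c * (y$1 - x$1)" using False by (simp add: c_def)
    have e: "(y$1 - x$1) * (z$2 - x$2) = (y$2 - x$2) * (z$1 - x$1)" using assms by (simp add: D2_def)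
    have "c * (y$2 - x$2) = (y$2 - x$2) * (z$1 - x$1) / (y$1 - x$1)" by (simp add: c_def)
    also have "\<dots> = z$2 - x$2" using e False by (simp add: field_simps)
    finally have z2: "z$2 = x$2 + c * (y$2 - x$2)" by simp
    have "z = x + c *\<^sub>R (y - x)"
      unfolding vec_eq_iff forall_2 using z1 z2 by simp
    then show ?thesis by blast
  qed
  show ?thesis
  proof (cases "y = x")
    case True
    then show ?thesis unfolding collinear_alt
      by (rule_tac x=x in exI, rule_tac x="z - x" in exI) (auto intro: exI[of _ 0] exI[of _ 1])
  next
    case False
    then obtain c where c: "z = x + c *\<^sub>R (y - x)" using key by blast
    show ?thesis unfolding collinear_alt
      apply (rule_tac x=x in exI, rule_tac x="y - x" in exI)
      using c by (auto intro: exI[of _ 0] exI[of _ 1])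
  qed
qed

lemma D2_zero_common:
  assumes "convex X" "convex Y" "convex Z"
    and "x \<in> Y \<inter> Z" "y \<in> X \<inter> Z" "z \<in> X \<inter> Y" and "D2 x y z = 0"
  shows "X \<inter> Y \<inter> Z \<noteq> {}"
proof -
  have "collinear {x, y, z}" using D2_collinear assms(7) .
  then have "between (y,z) x \<or> between (z,x) y \<or> between (x,y) z"
    using collinear_between_cases by blast
  then show ?thesis
  proof (elim disjE)
    assume "between (y,z) x"
    then have "x \<in> closed_segment y z" by (simp add: between_mem_segment)
    moreover have "closed_segment y z \<subseteq> X" using assms(6,7) by (intro convex_contains_segment[THEN iffD1, rule_format]) (use assms in auto)
    ultimately have "x \<in> X" by blast
    then show ?thesis using assms by blast
  next
    assume "between (z,x) y"
    then have "y \<in> closed_segment z x" by (simp add: between_mem_segment)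
    moreover have "closed_segment z x \<subseteq> Y" using assms(7,5) by (intro convex_contains_segment[THEN iffD1, rule_format]) (use assms in auto)
    ultimately have "y \<in> Y" by blast
    then show ?thesis using assms by blast
  next
    assume "between (x,y) z"
    then have "z \<in> closed_segment x y" by (simp add: between_mem_segment)
    moreover have "closed_segment x y \<subseteq> Z" using assms(5,6) by (intro convex_contains_segment[THEN iffD1, rule_format]) (use assms in auto)
    ultimately have "z \<in> Z" by blast
    then show ?thesis using assms by blast
  qed
qed
lemma D2_cyc: "D2 x y z = D2 y z x"
  unfolding D2_def by (simp add: algebra_simps)

lemma D2_affine: "D2 ((1 - t) *\<^sub>R x + t *\<^sub>R x') y z = (1 - t) * D2 x y z + t * D2 x' y z"
  unfolding D2_def by (simp add: algebra_simps)

lemma sign_step: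
  assumes "convex X" "convex Y" "convex Z" "X \<inter> Y \<inter> Z = {}"
    and "x \<in> Y \<inter> Z" "x' \<in> Y \<inter> Z" "y \<in> X \<inter> Z" "z \<in> X \<inter> Y"
  shows "sgn (D2 x y z) = sgn (D2 x' y z)"
proof (rule ccontr)
  assume ne: "sgn (D2 x y z) \<noteq> sgn (D2 x' y z)"
  define a where "a = D2 x y z"
  define b where "b = D2 x' y z"
  have a0: "a \<noteq> 0" using D2_zero_common[OF assms(1-3,5,7,8)] assms(4) unfolding a_def by blast
  have b0: "b \<noteq> 0" using D2_zero_common[OF assms(1-3,6,7,8)] assms(4) unfolding b_def by blast
  have ab: "a * b < 0" using ne a0 b0 unfolding a_def[symmetric] b_def[symmetric]
    by (cases "a > 0"; cases "b > 0") (auto simp: sgn_if mult_pos_neg mult_neg_pos)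
  define t where "t = a / (a - b)"
  have t01: "0 \<le> t" "t \<le> 1" using ab a0 b0 unfolding t_def
    by (cases "a > 0"; auto simp: divide_simps mult_less_0_iff)+
  have "a - b \<noteq> 0" using ab by (auto simp: mult_less_0_iff)
  define p where "p = (1 - t) *\<^sub>R x + t *\<^sub>R x'"
  have "p \<in> Y \<inter> Z" unfolding p_def using assms(2,3,5,6) t01
    by (auto intro!: convexD)
  moreover have "D2 p y z = 0" unfolding p_def D2_affine a_def[symmetric] b_def[symmetric]
    t_def using ab \<open>a - b \<noteq> 0\<close> by (simp add: field_simps)
  ultimately show False using D2_zero_common[OF assms(1-3) _ assms(7,8)] assms(4) by blast
qed

lemma sign_indep:
  assumes "convex X" "convex Y" "convex Z" "X \<inter> Y \<inter> Z = {}"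
    and "x \<in> Y \<inter> Z" "x' \<in> Y \<inter> Z" "y \<in> X \<inter> Z" "y' \<in> X \<inter> Z"
    and "z \<in> X \<inter> Y" "z' \<in> X \<inter> Y"
  shows "sgn (D2 x y z) = sgn (D2 x' y' z')"
proof -
  have "sgn (D2 x y z) = sgn (D2 x' y z)" by (rule sign_step) (use assms in auto)
  also have "\<dots> = sgn (D2 y z x')" by (metis D2_cyc)
  also have "\<dots> = sgn (D2 y' z x')" by (rule sign_step[of Y Z X]) (use assms in auto)
  also have "\<dots> = sgn (D2 z x' y')" by (metis D2_cyc)
  also have "\<dots> = sgn (D2 z' x' y')" by (rule sign_step[of Z X Y]) (use assms in auto)
  also have "\<dots> = sgn (D2 x' y' z')" by (metis D2_cyc)
  finally show ?thesis .
qed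

lemma orient_pts_D2: "orient_pts x y z = \<lfloor>sgn (D2 x y z)\<rfloor>"
  unfolding orient_pts_def D2_def by simp

lemma orient_sets_val:
  assumes "convex X" "convex Y" "convex Z" "X \<inter> Y \<inter> Z = {}"
    and "X \<inter> Y \<noteq> {}" "X \<inter> Z \<noteq> {}" "Y \<inter> Z \<noteq> {}"
    and "x \<in> Y \<inter> Z" "y \<in> X \<inter> Z" "z \<in> X \<inter> Y"
  shows "orient_sets X Y Z = orient_pts x y z"
proof -
  have s1: "(SOME x. x \<in> Y \<inter> Z) \<in> Y \<inter> Z" using someI_ex[of "\<lambda>x. x \<in> Y \<inter> Z"] assms(7) by blast
  have s2: "(SOME x. x \<in> X \<inter> Z) \<in> X \<inter> Z" using someI_ex[of "\<lambda>x. x \<in> X \<inter> Z"] assms(6) by blast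
  have s3: "(SOME x. x \<in> X \<inter> Y) \<in> X \<inter> Y" using someI_ex[of "\<lambda>x. x \<in> X \<inter> Y"] assms(5) by blast
  show ?thesis unfolding orient_sets_def orient_pts_D2 using assms(4)
    using sign_indep[OF assms(1-4) s1 assms(8) s2 assms(9) s3 assms(10)] by simp
qed

lemma floor_sgn0: "\<lfloor>sgn (r::real)\<rfloor> = 0 \<Longrightarrow> r = 0"
  using floor_of_int[of "-1", where 'a=real] by (cases "r > 0"; cases "r < 0") auto

lemma orient_sets_zero:
  assumes "convex X" "convex Y" "convex Z"
    and "X \<inter> Y \<noteq> {}" "X \<inter> Z \<noteq> {}" "Y \<inter> Z \<noteq> {}"
    and "orient_sets X Y Z = 0"
  shows "X \<inter> Y \<inter> Z \<noteq> {}"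
proof
  assume e: "X \<inter> Y \<inter> Z = {}"
  have s1: "(SOME x. x \<in> Y \<inter> Z) \<in> Y \<inter> Z" using someI_ex[of "\<lambda>x. x \<in> Y \<inter> Z"] assms(6) by blast
  have s2: "(SOME x. x \<in> X \<inter> Z) \<in> X \<inter> Z" using someI_ex[of "\<lambda>x. x \<in> X \<inter> Z"] assms(5) by blast
  have s3: "(SOME x. x \<in> X \<inter> Y) \<in> X \<inter> Y" using someI_ex[of "\<lambda>x. x \<in> X \<inter> Y"] assms(4) by blast
  have "\<lfloor>sgn (D2 (SOME x. x \<in> Y \<inter> Z) (SOME x. x \<in> X \<inter> Z) (SOME x. x \<in> X \<inter> Y))\<rfloor> = 0"
    using assms(7) e unfolding orient_sets_def orient_pts_D2 by simp
  then have "D2 (SOME x. x \<in> Y \<inter> Z) (SOME x. x \<in> X \<inter> Z) (SOME x. x \<in> X \<inter> Y) = 0"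
    by (rule floor_sgn0)
  from D2_zero_common[OF assms(1-3) s1 s2 s3 this] e show False by blast
qed

lemma helly4:
  fixes X1 X2 X3 X4 :: "(real^2) set"
  assumes "convex X1" "convex X2" "convex X3" "convex X4"
    and "X1 \<inter> X2 \<inter> X3 \<noteq> {}" "X1 \<inter> X2 \<inter> X4 \<noteq> {}" "X1 \<inter> X3 \<inter> X4 \<noteq> {}" "X2 \<inter> X3 \<inter> X4 \<noteq> {}"
  shows "X1 \<inter> X2 \<inter> X3 \<inter> X4 \<noteq> {}"
proof (cases "X1 = X2 \<or> X1 = X3 \<or> X1 = X4 \<or> X2 = X3 \<or> X2 = X4 \<or> X3 = X4")
  case True
  then show ?thesis using assms(5-8) by (elim disjE) (simp_all add: Int_ac)
next
  case False
  have dd: "X1 \<noteq> X2" "X1 \<noteq> X3" "X1 \<noteq> X4" "X2 \<noteq> X3" "X2 \<noteq> X4" "X3 \<noteq> X4"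
    "X2 \<noteq> X1" "X3 \<noteq> X1" "X4 \<noteq> X1" "X3 \<noteq> X2" "X4 \<noteq> X2" "X4 \<noteq> X3" using False by auto
  let ?F = "{X1, X2, X3, X4}"
  have c: "card ?F = 4" using False by auto
  have "\<Inter>?F \<noteq> {}"
  proof (rule Helly)
    show "DIM(real^2) + 1 \<le> card ?F" using c by simp
    show "\<forall>s\<in>?F. convex s" using assms by auto
    fix t assume t: "t \<subseteq> ?F" "card t = DIM(real^2) + 1"
    have t3: "card t = 3" using t(2) by simp
    have "t \<noteq> ?F"
    proof
      assume "t = ?F"
      then have "card ?F = 3" using t3 by (simp only:)
      with c show False by linarith
    qed
    then obtain W where W: "W \<in> ?F" "W \<notin> t" using t by blast
    then have "t \<subseteq> ?F - {W}" using t by blast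
    then have sub: "\<Inter>(?F - {W}) \<subseteq> \<Inter>t" by (rule Inter_anti_mono)
    have "W = X1 \<or> W = X2 \<or> W = X3 \<or> W = X4" using W by simp
    then have "\<Inter>(?F - {W}) \<noteq> {}"
      using assms(5-8) by (elim disjE) (simp_all add: insert_Diff_if Int_assoc dd)
    then show "\<Inter>t \<noteq> {}" using sub by (metis subset_empty)
  qed
  then show ?thesis by (simp add: Int_ac)
qed

theorem lemma4:
  fixes A1 A2 B1 B2 C1 C2 :: "(real^2) set"
  assumes "\<forall>X\<in>{A1, A2, B1, B2, C1, C2}. compact X \<and> convex X"
    and "\<forall>X\<in>{A1, A2, B1, B2, C1, C2}. \<forall>Y\<in>{A1, A2, B1, B2, C1, C2}. X \<inter> Y \<noteq> {}"
    and "orient4_zero A1 A2 B1 B2"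
    and "orient4_zero A1 A2 C1 C2"
    and "orient4_zero B1 B2 C1 C2"
    and "orient_sets A1 B1 C1 \<noteq> 0"
    and "orient_sets A2 B2 C2 \<noteq> 0"
  shows "orient_sets A1 B1 C1 = orient_sets A2 B2 C2"
proof -
  have cv: "convex A1" "convex A2" "convex B1" "convex B2" "convex C1" "convex C2"
    using assms(1) by auto
  have cvx: "convex X" if "X \<in> {A1, A2, B1, B2, C1, C2}" for X
    using assms(1) that by blast
  have pw: "X \<inter> Y \<noteq> {}" if "X \<in> {A1, A2, B1, B2, C1, C2}" "Y \<in> {A1, A2, B1, B2, C1, C2}" for X Y
    using assms(2) that by blast
  have tz: "X \<inter> Y \<inter> Z \<noteq> {}" if "X \<in> {A1, A2, B1, B2, C1, C2}" "Y \<in> {A1, A2, B1, B2, C1, C2}"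
    "Z \<in> {A1, A2, B1, B2, C1, C2}" "orient_sets X Y Z = 0" for X Y Z
    by (rule orient_sets_zero[OF cvx[OF that(1)] cvx[OF that(2)] cvx[OF that(3)]
          pw[OF that(1,2)] pw[OF that(1,3)] pw[OF that(2,3)] that(4)])
  have w: "A1 \<inter> A2 \<inter> B1 \<inter> B2 \<noteq> {}"
    using assms(3) unfolding orient4_zero_def by (intro helly4 cv tz) simp_all
  have v: "A1 \<inter> A2 \<inter> C1 \<inter> C2 \<noteq> {}"
    using assms(4) unfolding orient4_zero_def by (intro helly4 cv tz) simp_all
  have u: "B1 \<inter> B2 \<inter> C1 \<inter> C2 \<noteq> {}"
    using assms(5) unfolding orient4_zero_def by (intro helly4 cv tz) simp_all
  obtain pu pv pw' where pu: "pu \<in> B1 \<inter> B2 \<inter> C1 \<inter> C2" and pv: "pv \<in> A1 \<inter> A2 \<inter> C1 \<inter> C2"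
    and pw': "pw' \<in> A1 \<inter> A2 \<inter> B1 \<inter> B2" using u v w by blast
  have e1: "A1 \<inter> B1 \<inter> C1 = {}" by (rule ccontr) (use assms(6) in \<open>simp add: orient_sets_def\<close>)
  have e2: "A2 \<inter> B2 \<inter> C2 = {}" by (rule ccontr) (use assms(7) in \<open>simp add: orient_sets_def\<close>)
  have "orient_sets A1 B1 C1 = orient_pts pu pv pw'"
    by (rule orient_sets_val[OF cv(1) cv(3) cv(5) e1 pw pw pw]) (use pu pv pw' in auto)
  moreover have "orient_sets A2 B2 C2 = orient_pts pu pv pw'"
    by (rule orient_sets_val[OF cv(2) cv(4) cv(6) e2 pw pw pw]) (use pu pv pw' in auto)
  ultimately show ?thesis by simp
qed

end
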